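(* Let $A\in P(n)$ have rank one. Then for every unitarily invariant norm $N$ on $M_n$, $$I(N,A)=\min_{1\le i\le n}A_{ii}.$$
   Context: $M_n$ is the set of complex $n\times n$ matrices, $P(n)$ the positive semidefinite ones, $\circ$ the Hadamard product. $I(N,A)=\min\{N(A\circ B): B\in P(n),\ N(B)=1\}$. *)

theory Defs
  imports "HOL-Analysis.Analysis"
begin

definition adjoint_mat :: "complex^'n^'n \<Rightarrow> complex^'n^'n" where
  "adjoint_mat A = (\<chi> i j. cnj (A $ j $ i))"

definition unitary_mat :: "complex^'n^'n \<Rightarrow> bool" where
  "unitary_mat U \<longleftrightarrow> U ** adjoint_mat U = mat 1 \<and> adjoint_mat U ** U = mat 1"

definition hadamard :: "complex^'n^'n \<Rightarrow> complex^'n^'n \<Rightarrow> complex^'n^'n" (infixl "\<circ>\<^sub>H" 70) where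
  "A \<circ>\<^sub>H B = (\<chi> i j. A $ i $ j * B $ i $ j)"

definition psd :: "complex^'n^'n \<Rightarrow> bool" where
  "psd A \<longleftrightarrow> adjoint_mat A = A \<and>
     (\<forall>x::complex^'n. 0 \<le> Re (\<Sum>i\<in>UNIV. \<Sum>j\<in>UNIV. cnj (x $ i) * A $ i $ j * x $ j))"

definition is_matrix_norm :: "(complex^'n^'n \<Rightarrow> real) \<Rightarrow> bool" where
  "is_matrix_norm N \<longleftrightarrow>
     (\<forall>X. 0 \<le> N X) \<and> (\<forall>X. N X = 0 \<longleftrightarrow> X = 0) \<and>
     (\<forall>c X. N (c *\<^sub>R X) = \<bar>c\<bar> * N X) \<and>
     (\<forall>(c::complex) X. N (\<chi> i j. c * X $ i $ j) = cmod c * N X) \<and>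
     (\<forall>X Y. N (X + Y) \<le> N X + N Y)"

definition unitarily_invariant_norm :: "(complex^'n^'n \<Rightarrow> real) \<Rightarrow> bool" where
  "unitarily_invariant_norm N \<longleftrightarrow> is_matrix_norm N \<and>
     (\<forall>U V X. unitary_mat U \<longrightarrow> unitary_mat V \<longrightarrow> N (U ** X ** V) = N X)"

text \<open>I(N,A) = min { N(A o B) : B psd, N(B) = 1 }; rendered as an infimum, attainment
  is stated separately in the theorem.\<close>
definition I_idx :: "(complex^'n^'n \<Rightarrow> real) \<Rightarrow> complex^'n^'n \<Rightarrow> real" where
  "I_idx N A = Inf {N (A \<circ>\<^sub>H B) | B. psd B \<and> N B = 1}"

end

theory Submission
  imports Defs
begin
lemma rank1_decomp:
  fixes A :: "'a::field^'n^'m"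
  assumes "rank A = 1"
  shows "\<exists>a v. (\<forall>i j. A$i$j = a i * v$j) \<and> A \<noteq> 0"
proof -
  obtain B where B: "B \<subseteq> rows A" "vec.independent B" "rows A \<subseteq> vec.span B" "card B = 1"
    using vec.basis_exists[of "rows A"] assms unfolding row_rank_def_gen by metis
  then obtain v where Bv: "B = {v}" by (meson card_1_singletonE)
  have "\<forall>i. \<exists>c. row i A = c *s v"
  proof
    fix i
    have "row i A \<in> rows A" unfolding rows_def by auto
    then have "row i A \<in> vec.span {v}" using B Bv by auto
    then show "\<exists>c. row i A = c *s v" unfolding vec.span_singleton by auto
  qed
  then obtain a where a: "\<And>i. row i A = a i *s v" by metis
  have "\<forall>i j. A$i$j = a i * v$j"
  proof (intro allI)
    fix i j
    have "A$i$j = row i A $ j" by (simp add: row_def)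
    then show "A$i$j = a i * v$j" using a by simp
  qed
  moreover have "A \<noteq> 0"
  proof
    assume "A = 0"
    then have "rows A \<subseteq> {0}" unfolding rows_def row_def by (auto simp: vec_eq_iff)
    then have "vec.span (rows A) = vec.span {}"
      by (metis subset_singletonD vec.span_empty vec.span_insert_0)
    then have "vec.span {} = vec.span (rows A)" by simp
    then have "vec.dim (rows A) = card ({}::('a^'n) set)"
      by (rule vec.dim_eq_card[OF _ vec.independent_empty])
    then have "vec.dim (rows A) = 0" by simp
    then show False using assms unfolding row_rank_def_gen by simp
  qed
  ultimately show ?thesis by blast
qed

lemma if0_mult: "(if P then a else (0::complex)) * b = (if P then a*b else 0)" by simp
lemma cnj_if0: "cnj (if P then a else (0::complex)) = (if P then cnj a else 0)" by simp
lemma mult_if0: "b * (if P then a else (0::complex)) = (if P then b*a else 0)" by simp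

definition dmat :: "('n \<Rightarrow> complex) \<Rightarrow> complex^'n^'n" where
  "dmat u = (\<chi> i j. if i = j then u i else 0)"

lemma dmat_sandwich:
  fixes X :: "complex^'n^'n"
  shows "dmat u ** X ** adjoint_mat (dmat w) = (\<chi> i j. u i * X$i$j * cnj (w j))"
proof -
  have "(dmat u ** X) = (\<chi> i j. u i * X$i$j)"
    by (simp add: matrix_matrix_mult_def dmat_def vec_eq_iff if0_mult mult_if0 cnj_if0 cong: if_cong)
  then show ?thesis
    by (simp add: matrix_matrix_mult_def dmat_def adjoint_mat_def vec_eq_iff if0_mult mult_if0 cnj_if0 cong: if_cong)
qed

lemma dmat_unitary:
  assumes "\<And>i. cmod (u i) = 1"
  shows "unitary_mat (dmat u)"
proof -
  have e: "u i * cnj (u i) = 1" for i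
    using assms[of i] by (metis complex_norm_square mult.commute of_real_1 power_one)
  have 1: "dmat u ** adjoint_mat (dmat u) = mat 1"
    by (simp add: matrix_matrix_mult_def dmat_def adjoint_mat_def vec_eq_iff mat_def if0_mult mult_if0 cnj_if0 e cong: if_cong)
  have 2: "adjoint_mat (dmat u) ** dmat u = mat 1"
    by (simp add: matrix_matrix_mult_def dmat_def adjoint_mat_def vec_eq_iff mat_def if0_mult mult_if0 cnj_if0 e mult.commute cong: if_cong)
  show ?thesis using 1 2 unfolding unitary_mat_def by simp
qed

lemma avg_units:
  fixes c :: complex assumes "cmod c \<le> 1"
  shows "\<exists>u v. cmod u = 1 \<and> cmod v = 1 \<and> c = (u + v) / 2"
proof -
  define r where "r = cmod c"
  define th where "th = Arg c"
  define al where "al = arccos r"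
  have r: "0 \<le> r" "r \<le> 1" using assms by (auto simp: r_def)
  have ca: "cos al = r" using r by (simp add: al_def cos_arccos)
  have "(cis (th + al) + cis (th - al)) / 2 = cis th * ((cis al + cis (-al)) / 2)"
  proof -
    have "cis (th + al) = cis th * cis al" "cis (th - al) = cis th * cis (-al)"
      by (simp_all add: cis_mult)
    then show ?thesis by (simp add: algebra_simps)
  qed
  also have "(cis al + cis (-al)) / 2 = complex_of_real (cos al)"
    by (simp add: cis.ctr complex_eq_iff)
  also have "cis th * complex_of_real (cos al) = c"
    using rcis_cmod_Arg[of c] by (simp add: ca r_def th_def rcis_def mult.commute)
  finally show ?thesis by (metis norm_cis)
qed

lemma contraction:
  fixes N :: "complex^'n^'n \<Rightarrow> real" and X :: "complex^'n^'n"
  assumes N: "unitarily_invariant_norm N" and c: "\<And>i. cmod (c i) \<le> 1"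
  shows "N (\<chi> i j. c i * X$i$j * cnj (c j)) \<le> N X"
proof -
  have "\<forall>i. \<exists>p. cmod (fst p) = 1 \<and> cmod (snd p) = 1 \<and> c i = (fst p + snd p) / 2"
    using avg_units[OF c] by fastforce
  then obtain p where p: "\<And>i. cmod (fst (p i)) = 1 \<and> cmod (snd (p i)) = 1 \<and> c i = (fst (p i) + snd (p i)) / 2"
    by metis
  define u where "u i = fst (p i)" for i
  define v where "v i = snd (p i)" for i
  have u: "\<And>i. cmod (u i) = 1" and v: "\<And>i. cmod (v i) = 1" and cuv: "\<And>i. c i = (u i + v i)/2"
    using p by (auto simp: u_def v_def)
  have nm: "is_matrix_norm N" and inv: "\<And>U V X. unitary_mat U \<Longrightarrow> unitary_mat V \<Longrightarrow> N (U ** X ** V) = N X"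
    using N unfolding unitarily_invariant_norm_def by auto
  have adj: "unitary_mat (adjoint_mat U)" if "unitary_mat U" for U :: "complex^'n^'n"
  proof -
    have "adjoint_mat (adjoint_mat U) = U" by (simp add: adjoint_mat_def vec_eq_iff)
    then show ?thesis using that unfolding unitary_mat_def by simp
  qed
  define Y where "Y w z = (\<chi> i j. w i * X$i$j * cnj (z j))" for w z
  have NY: "N (Y w z) = N X" if "\<And>i. cmod (w i) = 1" "\<And>i. cmod (z i) = 1" for w z
  proof -
    have "N (dmat w ** X ** adjoint_mat (dmat z)) = N X"
      by (rule inv) (use dmat_unitary adj that in auto)
    then show ?thesis by (simp add: dmat_sandwich Y_def)
  qed
  have eq: "(\<chi> i j. c i * X$i$j * cnj (c j)) = (1/4::real) *\<^sub>R (Y u u + Y u v + Y v u + Y v v)"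
    apply (simp add: vec_eq_iff Y_def cuv vector_scaleR_component)
    apply (simp add: scaleR_conv_of_real field_simps)
    done
  have tri: "\<And>X Y. N (X + Y) \<le> N X + N Y" and sc: "\<And>c X. N (c *\<^sub>R X) = \<bar>c\<bar> * N X"
    using nm unfolding is_matrix_norm_def by auto
  have "N (Y u u + Y u v + Y v u + Y v v) \<le> N (Y u u) + N (Y u v) + N (Y v u) + N (Y v v)"
    by (meson tri add_mono order_trans order_refl)
  also have "\<dots> = 4 * N X" using NY u v by simp
  finally show ?thesis unfolding eq sc by simp
qed
lemma if_conj_split: "(if P \<and> Q then a else b) = (if P then if Q then a else b else b)" by simp

lemma sum_if_const: "(\<Sum>j\<in>S. if P then g j else (0::complex)) = (if P then (\<Sum>j\<in>S. g j) else 0)" by auto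

lemma main_x:
  fixes A :: "complex^'n^'n" and N :: "complex^'n^'n \<Rightarrow> real"
  assumes Ax: "\<And>i j. A$i$j = x i * cnj (x j)" and N: "unitarily_invariant_norm N"
  shows "(\<exists>B. psd B \<and> N B = 1 \<and> N (A \<circ>\<^sub>H B) = I_idx N A)
         \<and> I_idx N A = (MIN i. Re (A $ i $ i))"
proof -
  have nm: "is_matrix_norm N" using N unfolding unitarily_invariant_norm_def by auto
  have N0: "\<And>X. 0 \<le> N X" and Nz: "\<And>X. N X = 0 \<longleftrightarrow> X = 0" and sc: "\<And>c X. N (c *\<^sub>R X) = \<bar>c\<bar> * N X"
    using nm unfolding is_matrix_norm_def by auto
  have Rd: "Re (A$i$i) = (cmod (x i))^2" for i
    using complex_norm_square[of "x i"] Ax[of i i] by (metis Re_complex_of_real)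
  define \<mu> where "\<mu> = (MIN i. Re (A $ i $ i))"
  have "\<mu> \<in> range (\<lambda>i. Re (A $ i $ i))" unfolding \<mu>_def by (rule Min_in) auto
  then obtain k where k: "\<mu> = Re (A$k$k)" by auto
  have mule: "\<mu> \<le> (cmod (x i))^2" for i
    unfolding \<mu>_def Rd[symmetric] by (rule Min_le) auto
  have mu0: "0 \<le> \<mu>" using k Rd by simp
  have lower: "\<mu> \<le> N (A \<circ>\<^sub>H B)" if NB: "N B = 1" for B
  proof (cases "\<mu> = 0")
    case True then show ?thesis using N0 by simp
  next
    case False
    then have mup: "0 < \<mu>" using mu0 by simp
    have xnz: "x i \<noteq> 0" for i using mule[of i] mup by auto
    define c where "c i = complex_of_real (sqrt \<mu>) / x i" for i
    have cle: "cmod (c i) \<le> 1" for i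
    proof -
      have "sqrt \<mu> \<le> cmod (x i)" using mule[of i] mu0 real_le_lsqrt real_sqrt_le_iff
        by (metis norm_ge_zero real_sqrt_abs real_sqrt_le_mono abs_of_nonneg power2_eq_square real_sqrt_mult_self)
      then show ?thesis using xnz mu0 by (simp add: c_def norm_divide divide_le_eq_1)
    qed
    have ent: "c i * (x i * cnj (x j) * B$i$j) * cnj (c j) = complex_of_real \<mu> * B$i$j" for i j
    proof -
      have "c i * x i = complex_of_real (sqrt \<mu>)" using xnz by (simp add: c_def)
      moreover have "cnj (x j) * cnj (c j) = complex_of_real (sqrt \<mu>)"
        using xnz[of j] by (simp add: c_def)
      moreover have "complex_of_real (sqrt \<mu>) * complex_of_real (sqrt \<mu>) = complex_of_real \<mu>"
        using mu0 by (simp flip: of_real_mult)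
      ultimately show ?thesis
        by (metis (no_types, lifting) ab_semigroup_mult_class.mult_ac(1) mult.commute)
    qed
    have "(\<chi> i j. c i * (A \<circ>\<^sub>H B)$i$j * cnj (c j)) = \<mu> *\<^sub>R B"
      apply (simp add: vec_eq_iff hadamard_def Ax vector_scaleR_component)
      apply (simp add: scaleR_conv_of_real ent)
      done
    moreover have "N (\<chi> i j. c i * (A \<circ>\<^sub>H B)$i$j * cnj (c j)) \<le> N (A \<circ>\<^sub>H B)"
      by (rule contraction[OF N cle])
    ultimately have "N (\<mu> *\<^sub>R B) \<le> N (A \<circ>\<^sub>H B)" by simp
    then show ?thesis using sc NB mu0 by simp
  qed
  define E :: "complex^'n^'n" where "E = (\<chi> i j. if i = k \<and> j = k then 1 else 0)"
  have "E \<noteq> 0" by (auto simp: E_def vec_eq_iff)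
  then have NE: "N E > 0" using N0 Nz by (metis less_eq_real_def)
  define B where "B = (1 / N E) *\<^sub>R E"
  have NB: "N B = 1" using NE sc by (simp add: B_def)
  have Bij: "B$i$j = (if i = k \<and> j = k then complex_of_real (1 / N E) else 0)" for i j
    apply (simp add: B_def E_def vector_scaleR_component)
    apply (simp add: scaleR_conv_of_real)
    done
  have psdB: "psd B"
    unfolding psd_def
  proof (intro conjI allI)
    show "adjoint_mat B = B" by (simp add: vec_eq_iff adjoint_mat_def Bij)
    fix y :: "complex^'n"
    have "(\<Sum>i\<in>UNIV. \<Sum>j\<in>UNIV. cnj (y $ i) * B $ i $ j * y $ j)
        = complex_of_real (1 / N E) * (cnj (y$k) * y$k)"
      by (simp add: Bij if0_mult mult_if0 if_conj_split sum_if_const cong: if_cong)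
    also have "\<dots> = complex_of_real (1 / N E * (cmod (y$k))^2)"
      using complex_norm_square[of "y$k"] by (simp add: mult.commute)
    finally show "0 \<le> Re (\<Sum>i\<in>UNIV. \<Sum>j\<in>UNIV. cnj (y $ i) * B $ i $ j * y $ j)"
      using NE by simp
  qed
  have "A \<circ>\<^sub>H B = \<mu> *\<^sub>R B"
  proof -
    have "A$k$k = complex_of_real \<mu>" using k Rd[of k] Ax[of k k] complex_norm_square[of "x k"] by simp
    then show ?thesis
      apply (simp add: vec_eq_iff hadamard_def Bij vector_scaleR_component)
      apply (simp add: scaleR_conv_of_real)
      done
  qed
  then have NAB: "N (A \<circ>\<^sub>H B) = \<mu>" using sc NB mu0 by simp
  have I: "I_idx N A = \<mu>"
    unfolding I_idx_def
  proof (rule cInf_eq_minimum)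
    show "\<mu> \<in> {N (A \<circ>\<^sub>H B) |B. psd B \<and> N B = 1}" using psdB NB NAB by blast
  next
    fix z assume "z \<in> {N (A \<circ>\<^sub>H B) |B. psd B \<and> N B = 1}"
    then show "\<mu> \<le> z" using lower by blast
  qed
  show ?thesis using I NAB NB psdB \<mu>_def by metis
qed
theorem proposition5p2:
  fixes A :: "complex^'n^'n" and N :: "complex^'n^'n \<Rightarrow> real"
  assumes "psd A" and "rank A = 1" and "unitarily_invariant_norm N"
  shows "(\<exists>B. psd B \<and> N B = 1 \<and> N (A \<circ>\<^sub>H B) = I_idx N A)
         \<and> I_idx N A = (MIN i. Re (A $ i $ i))"
proof -
  obtain a v where av: "\<forall>i j. A$i$j = a i * v$j" and A0: "A \<noteq> 0"
    using rank1_decomp[OF assms(2)] by blast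
  have herm: "A$i$j = cnj (A$j$i)" for i j
  proof -
    have "adjoint_mat A = A" using assms(1) unfolding psd_def by simp
    then have "adjoint_mat A $ i $ j = A $ i $ j" by simp
    then show ?thesis by (simp add: adjoint_mat_def)
  qed
  have minor: "A$i$j * A$k$l = A$i$l * A$k$j" for i j k l
    using av by (simp add: mult_ac)
  have diagnn: "0 \<le> Re (A$k$k)" for k
  proof -
    have "0 \<le> Re (\<Sum>i\<in>UNIV. \<Sum>j\<in>UNIV. cnj (axis k 1 $ i) * A $ i $ j * axis k 1 $ j)"
      using assms(1) unfolding psd_def by blast
    moreover have "(\<Sum>i\<in>UNIV. \<Sum>j\<in>UNIV. cnj (axis k 1 $ i) * A $ i $ j * axis k (1::complex) $ j) = A$k$k"
      by (simp add: axis_def if0_mult mult_if0 cnj_if0 sum_if_const cong: if_cong)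
    ultimately show ?thesis by simp
  qed
  have diagreal: "A$k$k = complex_of_real (Re (A$k$k))" for k
    using herm[of k k] by (metis Reals_cnj_iff complex_is_Real_iff of_real_Re)
  have "\<exists>k. A$k$k \<noteq> 0"
  proof (rule ccontr)
    assume "\<not> (\<exists>k. A$k$k \<noteq> 0)"
    then have d0: "\<And>k. A$k$k = 0" by blast
    obtain i j where ij: "A$i$j \<noteq> 0" using A0 by (auto simp: vec_eq_iff)
    have "A$i$j * A$j$i = A$i$i * A$j$j" using minor[of i j j i] by simp
    then have "A$i$j * cnj (A$i$j) = 0" using d0 herm[of j i] by simp
    then show False using ij by simp
  qed
  then obtain k where k: "A$k$k \<noteq> 0" by blast
  define r where "r = Re (A$k$k)"
  have Akk: "A$k$k = complex_of_real r" using diagreal r_def by simp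
  have "r \<noteq> 0" using k Akk by auto
  moreover have "0 \<le> r" using diagnn[of k] unfolding r_def .
  ultimately have rpos: "0 < r" by linarith
  define x where "x i = A$i$k / complex_of_real (sqrt r)" for i
  have Ax: "A$i$j = x i * cnj (x j)" for i j
  proof -
    have "x i * cnj (x j) = A$i$k * cnj (A$j$k) / (complex_of_real (sqrt r) * complex_of_real (sqrt r))"
      by (simp add: x_def)
    also have "complex_of_real (sqrt r) * complex_of_real (sqrt r) = complex_of_real r"
      using rpos by (simp flip: of_real_mult)
    also have "cnj (A$j$k) = A$k$j" using herm[of k j] by simp
    also have "A$i$k * A$k$j = A$i$j * A$k$k" using minor[of i k k j] by simp
    finally show ?thesis using Akk rpos by simp
  qed
  show ?thesis by (rule main_x[OF Ax assms(3)])
qed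

end
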